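(* Let $G$ be a graph, $k\ge1$, and $S,T$ independent sets of $G$ of size $k$. Let $\mathcal{F}$ be the family obtained from an independence covering family for $(G,k)$ by removing all members of size less than $k$ and adding $S$ and $T$. Let $\mathcal{G}$ be the graph with vertex set $\mathcal{F}$ in which distinct $I,I'\in\mathcal{F}$ are adjacent iff $|I\cap I'|\ge k-1$. If there is a token jumping reconfiguration sequence $S=I_0,I_1,\dots,I_m=T$ in $G$, then there is a path from $S$ to $T$ in $\mathcal{G}$.
   Context: An independence covering family for $(G,k)$ is a family of independent sets of $G$ such that every independent set of $G$ of size at most $k$ is a subset of some member. A token jumping reconfiguration sequence from $S$ to $T$ is a finite sequence $S=I_0,\dots,I_m=T$ of independent sets of $G$ of size $k$ with each $I_{j+1}=(I_j\setminus\{u\})\cup\{v\}$ for some $u\in I_j$, $v\in V(G)\setminus I_j$. *)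

theory Defs
  imports Main
begin

definition graph :: "'a set \<Rightarrow> ('a \<Rightarrow> 'a \<Rightarrow> bool) \<Rightarrow> bool" where
  "graph V E \<longleftrightarrow> finite V \<and> (\<forall>x y. E x y \<longrightarrow> x \<in> V \<and> y \<in> V)
     \<and> (\<forall>x y. E x y \<longrightarrow> E y x) \<and> (\<forall>x. \<not> E x x)"

definition indep_set :: "'a set \<Rightarrow> ('a \<Rightarrow> 'a \<Rightarrow> bool) \<Rightarrow> 'a set \<Rightarrow> bool" where
  "indep_set V E I \<longleftrightarrow> I \<subseteq> V \<and> (\<forall>x\<in>I. \<forall>y\<in>I. \<not> E x y)"

definition indep_covering_family ::
  "'a set \<Rightarrow> ('a \<Rightarrow> 'a \<Rightarrow> bool) \<Rightarrow> nat \<Rightarrow> 'a set set \<Rightarrow> bool" where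
  "indep_covering_family V E k \<F> \<longleftrightarrow>
     (\<forall>I\<in>\<F>. indep_set V E I) \<and>
     (\<forall>J. indep_set V E J \<and> card J \<le> k \<longrightarrow> (\<exists>I\<in>\<F>. J \<subseteq> I))"

definition tj_step :: "'a set \<Rightarrow> 'a set \<Rightarrow> 'a set \<Rightarrow> bool" where
  "tj_step V I J \<longleftrightarrow> (\<exists>u\<in>I. \<exists>v\<in>V - I. J = (I - {u}) \<union> {v})"

definition tj_sequence ::
  "'a set \<Rightarrow> ('a \<Rightarrow> 'a \<Rightarrow> bool) \<Rightarrow> nat \<Rightarrow> 'a set list \<Rightarrow> 'a set \<Rightarrow> 'a set \<Rightarrow> bool" where
  "tj_sequence V E k Is S T \<longleftrightarrow> Is \<noteq> [] \<and> hd Is = S \<and> last Is = T \<and>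
     (\<forall>I\<in>set Is. indep_set V E I \<and> card I = k) \<and>
     (\<forall>j. Suc j < length Is \<longrightarrow> tj_step V (Is ! j) (Is ! Suc j))"

definition reduced_family :: "nat \<Rightarrow> 'a set set \<Rightarrow> 'a set \<Rightarrow> 'a set \<Rightarrow> 'a set set" where
  "reduced_family k C S T = {I \<in> C. k \<le> card I} \<union> {S, T}"

definition aux_adj :: "nat \<Rightarrow> 'a set \<Rightarrow> 'a set \<Rightarrow> bool" where
  "aux_adj k I I' \<longleftrightarrow> I \<noteq> I' \<and> k - 1 \<le> card (I \<inter> I')"

definition is_path :: "'b set \<Rightarrow> ('b \<Rightarrow> 'b \<Rightarrow> bool) \<Rightarrow> 'b list \<Rightarrow> 'b \<Rightarrow> 'b \<Rightarrow> bool" where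
  "is_path Vs Adj ps A B \<longleftrightarrow> ps \<noteq> [] \<and> hd ps = A \<and> last ps = B \<and> set ps \<subseteq> Vs \<and>
     (\<forall>j. Suc j < length ps \<longrightarrow> Adj (ps ! j) (ps ! Suc j))"

end

theory Submission
  imports Defs
begin

lemma path_ext:
  assumes "is_path F (aux_adj k) ps A B" "C \<in> F" "k - 1 \<le> card (B \<inter> C)"
  shows "\<exists>ps. is_path F (aux_adj k) ps A C"
proof (cases "B = C")
  case True thus ?thesis using assms by blast
next
  case False
  have "is_path F (aux_adj k) (ps @ [C]) A C"
    unfolding is_path_def
  proof (intro conjI allI impI)
    show "hd (ps @ [C]) = A" using assms(1) unfolding is_path_def by auto
    show "set (ps @ [C]) \<subseteq> F" using assms(1,2) unfolding is_path_def by auto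
  next
    fix j assume j: "Suc j < length (ps @ [C])"
    show "aux_adj k ((ps @ [C]) ! j) ((ps @ [C]) ! Suc j)"
    proof (cases "Suc j < length ps")
      case True thus ?thesis using assms(1) unfolding is_path_def by (simp add: nth_append)
    next
      case False
      hence jj: "j = length ps - 1" "Suc j = length ps" using j by auto
      have "ps ! j = B" using assms(1) jj unfolding is_path_def by (metis last_conv_nth)
      thus ?thesis using jj False assms(3) \<open>B \<noteq> C\<close> unfolding aux_adj_def by (simp add: nth_append)
    qed
  qed simp_all
  thus ?thesis by blast
qed

lemma rt_path:
  assumes "(A, B) \<in> {(X, Y). X \<in> F \<and> Y \<in> F \<and> k - 1 \<le> card (X \<inter> Y)}\<^sup>*" "A \<in> F"
  shows "\<exists>ps. is_path F (aux_adj k) ps A B"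
  using assms(1)
proof (induction rule: rtrancl_induct)
  case base
  have "is_path F (aux_adj k) [A] A A" using assms(2) unfolding is_path_def by auto
  thus ?case by blast
next
  case (step y z)
  then obtain ps where "is_path F (aux_adj k) ps A y" by blast
  thus ?case using path_ext step by blast
qed

lemma card_step:
  assumes "tj_step V I J" "finite I" "card I = k"
  shows "k - 1 \<le> card (I \<inter> J)"
proof -
  from assms obtain u v where u: "u \<in> I" and v: "v \<notin> I" and J: "J = (I - {u}) \<union> {v}"
    unfolding tj_step_def by blast
  have "I \<inter> J = I - {u}" using J v by auto
  thus ?thesis using u assms by simp
qed

theorem lemma7p2:
  fixes V :: "'a set" and E :: "'a \<Rightarrow> 'a \<Rightarrow> bool" and k :: nat
    and C :: "'a set set" and S T :: "'a set"
  assumes "graph V E"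
    and "1 \<le> k"
    and "indep_set V E S" and "card S = k"
    and "indep_set V E T" and "card T = k"
    and "indep_covering_family V E k C"
    and "tj_sequence V E k Is S T"
  shows "\<exists>ps. is_path (reduced_family k C S T) (aux_adj k) ps S T"
proof -
  define F where "F = reduced_family k C S T"
  define R where "R = {(X, Y). X \<in> F \<and> Y \<in> F \<and> k - 1 \<le> card (X \<inter> Y)}"
  have finV: "finite V" using assms(1) unfolding graph_def by blast
  have FV: "X \<subseteq> V" if "X \<in> F" for X
    using that assms(3,5,7) unfolding F_def reduced_family_def indep_covering_family_def indep_set_def
    by auto
  have SF: "S \<in> F" "T \<in> F" unfolding F_def reduced_family_def by auto
  have seq: "Is \<noteq> []" "hd Is = S" "last Is = T"
    "\<And>I. I \<in> set Is \<Longrightarrow> indep_set V E I \<and> card I = k"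
    "\<And>j. Suc j < length Is \<Longrightarrow> tj_step V (Is ! j) (Is ! Suc j)"
    using assms(8) unfolding tj_sequence_def by auto
  have main: "\<exists>J\<in>F. Is ! j \<subseteq> J \<and> (S, J) \<in> R\<^sup>*" if "j < length Is" for j
    using that
  proof (induction j)
    case 0
    have "Is ! 0 = S" using seq(1,2) by (simp add: hd_conv_nth)
    thus ?case using SF by auto
  next
    case (Suc j)
    then obtain J where J: "J \<in> F" "Is ! j \<subseteq> J" "(S, J) \<in> R\<^sup>*" by auto
    have mem: "Is ! Suc j \<in> set Is" "Is ! j \<in> set Is" using Suc.prems by auto
    have i1: "indep_set V E (Is ! Suc j)" "card (Is ! Suc j) = k" using seq(4)[OF mem(1)] by auto
    have i0: "card (Is ! j) = k" using seq(4)[OF mem(2)] by auto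
    hence fin0: "finite (Is ! j)" using assms(2) by (metis card.infinite not_one_le_zero)
    obtain J' where J': "J' \<in> C" "Is ! Suc j \<subseteq> J'"
      using assms(7) i1 unfolding indep_covering_family_def by force
    have "J' \<subseteq> V" using J'(1) assms(7) unfolding indep_covering_family_def indep_set_def by auto
    hence finJ': "finite J'" using finV finite_subset by blast
    have "k \<le> card J'" using i1(2) J'(2) card_mono[OF finJ'] by metis
    hence J'F: "J' \<in> F" using J'(1) unfolding F_def reduced_family_def by auto
    have finJ: "finite J" using FV[OF J(1)] finV finite_subset by blast
    have "k - 1 \<le> card (Is ! j \<inter> Is ! Suc j)"
      using card_step[OF seq(5)[OF Suc.prems] fin0 i0] .
    also have "\<dots> \<le> card (J \<inter> J')"
      by (rule card_mono) (use finJ J(2) J'(2) in auto)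
    finally have "(J, J') \<in> R" using J(1) J'F unfolding R_def by auto
    hence "(S, J') \<in> R\<^sup>*" using J(3) by auto
    thus ?case using J'F J'(2) by blast
  qed
  have lst: "Is ! (length Is - 1) = T" using seq(1,3) by (simp add: last_conv_nth)
  obtain J where J: "J \<in> F" "T \<subseteq> J" "(S, J) \<in> R\<^sup>*"
    using main[of "length Is - 1"] seq(1) lst by auto
  have finJ: "finite J" using FV[OF J(1)] finV finite_subset by blast
  have "J \<inter> T = T" using J(2) by auto
  hence "(J, T) \<in> R" using J(1) SF assms(6) unfolding R_def by auto
  hence "(S, T) \<in> R\<^sup>*" using J(3) by auto
  thus ?thesis using rt_path[of S T F k] SF unfolding R_def F_def by blast
qed

end
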